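(* Let $P$ be a definite program and $Q$ an atomic query. If $P$ is order-acceptable with respect to $\{Q\}$, then there exists a minimal quasi-ordering $\ge$ such that $P$ is order-acceptable with respect to $\{Q\}$ via $\ge$.
   Context: A quasi-ordering is a reflexive transitive relation $\ge$; its strict part is $s>t$ iff $s\ge t$ and not $t\ge s$; it is well-founded if there is no infinite chain $s_1>s_2>\cdots$. For a predicate symbol, $\mathit{rel}(A)$ denotes the predicate of atom $A$. Predicate $p$ refers to $q$ in $P$ if some clause has $p$ in its head and $q$ in its body; $p\sqsupseteq q$ is the transitive (not reflexive) closure of ``refers to''; $p\simeq q$ (mutually recursive) iff $p\sqsupseteq q$ and $q\sqsupseteq p$. $\mathrm{Call}(P,S)$ is the set of atoms $A$ such that a variant of $A$ is a selected atom in some branch of the LD-tree (leftmost selection) of $P\cup\{Q\}$ for some $Q\in S$. $P$ is order-acceptable with respect to a set $S$ of atomic queries via a well-founded quasi-ordering $\ge$ on $\mathrm{Call}(P,S)$ if for every $A\in\mathrm{Call}(P,S)$, every (renamed apart) clause $A'\leftarrow B_1,\dots,B_n$ of $P$ such that $\theta=\mathrm{mgu}(A,A')$ exists, every $B_i$ with $\mathit{rel}(B_i)\simeq\mathit{rel}(A)$, and every computed answer substitution $\sigma$ for $\leftarrow(B_1,\dots,B_{i-1})\theta$, we have $A>B_i\theta\sigma$. $P$ is order-acceptable w.r.t. $S$ if such a $\ge$ exists. A quasi-ordering $\ge$ such that $P$ is order-acceptable w.r.t. $\{Q\}$ via $\ge$ is minimal if there is no quasi-ordering $\ge_1\subsetneq\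 \ge$ (as sets of pairs) such that $P$ is order-acceptable w.r.t. $\{Q\}$ via $\ge_1$. *)

theory Defs
  imports Main "HOL-Library.Infinite_Typeclass"
begin

datatype ('f, 'v) trm = Var 'v | Fn 'f "('f, 'v) trm list"

datatype ('p, 'f, 'v) atom = Atom 'p "('f, 'v) trm list"

datatype ('p, 'f, 'v) clause = Clause "('p, 'f, 'v) atom" "('p, 'f, 'v) atom list"

type_synonym ('f, 'v) subst = "'v \<Rightarrow> ('f, 'v) trm"

fun subst_trm :: "('f, 'v) subst \<Rightarrow> ('f, 'v) trm \<Rightarrow> ('f, 'v) trm" where
  "subst_trm \<sigma> (Var x) = \<sigma> x"
| "subst_trm \<sigma> (Fn f ts) = Fn f (map (subst_trm \<sigma>) ts)"

fun vars_trm :: "('f, 'v) trm \<Rightarrow> 'v set" where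
  "vars_trm (Var x) = {x}"
| "vars_trm (Fn f ts) = \<Union> (set (map vars_trm ts))"

fun subst_atom :: "('f, 'v) subst \<Rightarrow> ('p, 'f, 'v) atom \<Rightarrow> ('p, 'f, 'v) atom" where
  "subst_atom \<sigma> (Atom p ts) = Atom p (map (subst_trm \<sigma>) ts)"

fun vars_atom :: "('p, 'f, 'v) atom \<Rightarrow> 'v set" where
  "vars_atom (Atom p ts) = \<Union> (set (map vars_trm ts))"

fun rel :: "('p, 'f, 'v) atom \<Rightarrow> 'p" where
  "rel (Atom p ts) = p"

definition vars_atoms :: "('p, 'f, 'v) atom list \<Rightarrow> 'v set" where
  "vars_atoms G = \<Union> (set (map vars_atom G))"

fun head :: "('p, 'f, 'v) clause \<Rightarrow> ('p, 'f, 'v) atom" where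
  "head (Clause H B) = H"

fun body :: "('p, 'f, 'v) clause \<Rightarrow> ('p, 'f, 'v) atom list" where
  "body (Clause H B) = B"

fun subst_clause :: "('f, 'v) subst \<Rightarrow> ('p, 'f, 'v) clause \<Rightarrow> ('p, 'f, 'v) clause" where
  "subst_clause \<sigma> (Clause H B) = Clause (subst_atom \<sigma> H) (map (subst_atom \<sigma>) B)"

fun vars_clause :: "('p, 'f, 'v) clause \<Rightarrow> 'v set" where
  "vars_clause (Clause H B) = vars_atom H \<union> vars_atoms B"

text \<open>Composition: first \<sigma>, then \<tau> (so that t(\<sigma> \<circ>s \<tau>) = (t\<sigma>)\<tau>).\<close>
definition subst_comp :: "('f, 'v) subst \<Rightarrow> ('f, 'v) subst \<Rightarrow> ('f, 'v) subst" (infixl "\<circ>s" 75) where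
  "\<sigma> \<circ>s \<tau> = (\<lambda>x. subst_trm \<tau> (\<sigma> x))"

definition restrict_subst :: "('f, 'v) subst \<Rightarrow> 'v set \<Rightarrow> ('f, 'v) subst" where
  "restrict_subst \<sigma> V = (\<lambda>x. if x \<in> V then \<sigma> x else Var x)"

definition unifier :: "('f, 'v) subst \<Rightarrow> ('p, 'f, 'v) atom \<Rightarrow> ('p, 'f, 'v) atom \<Rightarrow> bool" where
  "unifier \<theta> A B \<longleftrightarrow> subst_atom \<theta> A = subst_atom \<theta> B"

definition is_mgu :: "('f, 'v) subst \<Rightarrow> ('p, 'f, 'v) atom \<Rightarrow> ('p, 'f, 'v) atom \<Rightarrow> bool" where
  "is_mgu \<theta> A B \<longleftrightarrow> unifier \<theta> A B \<and> (\<forall>\<tau>. unifier \<tau> A B \<longrightarrow> (\<exists>\<delta>. \<tau> = \<theta> \<circ>s \<delta>))"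

definition renaming :: "('v \<Rightarrow> 'v) \<Rightarrow> ('f, 'v) subst" where
  "renaming \<rho> = (\<lambda>x. Var (\<rho> x))"

definition variant_atom :: "('p, 'f, 'v) atom \<Rightarrow> ('p, 'f, 'v) atom \<Rightarrow> bool" where
  "variant_atom A B \<longleftrightarrow> (\<exists>\<rho>. bij \<rho> \<and> A = subst_atom (renaming \<rho>) B)"

definition variant_clause :: "('p, 'f, 'v) clause \<Rightarrow> ('p, 'f, 'v) clause \<Rightarrow> bool" where
  "variant_clause c' c \<longleftrightarrow> (\<exists>\<rho>. bij \<rho> \<and> c' = subst_clause (renaming \<rho>) c)"

text \<open>A state is (current goal, accumulated substitution, set of variables used so far).
  The clause variant used in a step is renamed apart from all variables used so far.\<close>
inductive ld_step :: "('p, 'f, 'v) clause set \<Rightarrow>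
    ('p, 'f, 'v) atom list \<times> ('f, 'v) subst \<times> 'v set \<Rightarrow>
    ('p, 'f, 'v) atom list \<times> ('f, 'v) subst \<times> 'v set \<Rightarrow> bool" for P where
  "\<lbrakk> c \<in> P; variant_clause c' c; vars_clause c' \<inter> U = {};
     is_mgu \<mu> A (head c') \<rbrakk> \<Longrightarrow>
   ld_step P (A # Gs, \<theta>, U)
     (map (subst_atom \<mu>) (body c' @ Gs), \<theta> \<circ>s \<mu>,
      U \<union> vars_clause c' \<union> \<Union> ((\<lambda>x. vars_trm (\<mu> x)) ` (U \<union> vars_clause c')))"

text \<open>Computed answer substitution for the query G, where the derivation is started with
  the variables in U0 (together with those of G) considered as used.\<close>
definition cas :: "('p, 'f, 'v) clause set \<Rightarrow> ('p, 'f, 'v) atom list \<Rightarrow> 'v set \<Rightarrow> ('f, 'v) subst \<Rightarrow> bool" where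
  "cas P G U0 \<sigma> \<longleftrightarrow> (\<exists>\<theta> U. (ld_step P)\<^sup>*\<^sup>* (G, Var, U0 \<union> vars_atoms G) ([], \<theta>, U)
                          \<and> \<sigma> = restrict_subst \<theta> (vars_atoms G))"

definition Call :: "('p, 'f, 'v) clause set \<Rightarrow> ('p, 'f, 'v) atom set \<Rightarrow> ('p, 'f, 'v) atom set" where
  "Call P S = {A. \<exists>Q\<in>S. \<exists>B Gs \<theta> U. (ld_step P)\<^sup>*\<^sup>* ([Q], Var, vars_atom Q) (B # Gs, \<theta>, U)
                              \<and> variant_atom B A}"

definition refers_to :: "('p, 'f, 'v) clause set \<Rightarrow> ('p \<times> 'p) set" where
  "refers_to P = {(p, q). \<exists>c\<in>P. rel (head c) = p \<and> q \<in> rel ` set (body c)}"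

definition mutrec :: "('p, 'f, 'v) clause set \<Rightarrow> 'p \<Rightarrow> 'p \<Rightarrow> bool" where
  "mutrec P p q \<longleftrightarrow> (p, q) \<in> (refers_to P)\<^sup>+ \<and> (q, p) \<in> (refers_to P)\<^sup>+"

text \<open>ge is a set of pairs (s,t) meaning s \<ge> t.\<close>
definition strict_part :: "('a \<times> 'a) set \<Rightarrow> ('a \<times> 'a) set" where
  "strict_part ge = {(s, t). (s, t) \<in> ge \<and> (t, s) \<notin> ge}"

definition wf_quasi_order_on :: "'a set \<Rightarrow> ('a \<times> 'a) set \<Rightarrow> bool" where
  "wf_quasi_order_on C ge \<longleftrightarrow> ge \<subseteq> C \<times> C \<and> refl_on C ge \<and> trans ge
      \<and> wf ((strict_part ge)\<inverse>)"

definition order_acceptable_via ::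
  "('p, 'f, 'v) clause set \<Rightarrow> ('p, 'f, 'v) atom set \<Rightarrow> (('p, 'f, 'v) atom \<times> ('p, 'f, 'v) atom) set \<Rightarrow> bool" where
  "order_acceptable_via P S ge \<longleftrightarrow>
     wf_quasi_order_on (Call P S) ge \<and>
     (\<forall>A \<in> Call P S. \<forall>c \<in> P. \<forall>c' \<theta>.
        variant_clause c' c \<and> vars_clause c' \<inter> vars_atom A = {} \<and> is_mgu \<theta> A (head c') \<longrightarrow>
        (\<forall>i < length (body c'). mutrec P (rel (body c' ! i)) (rel A) \<longrightarrow>
           (\<forall>\<sigma>. cas P (map (subst_atom \<theta>) (take i (body c')))
                     (vars_atom A \<union> vars_clause (subst_clause \<theta> c')) \<sigma> \<longrightarrow>
                 (A, subst_atom \<sigma> (subst_atom \<theta> (body c' ! i))) \<in> strict_part ge)))"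

definition order_acceptable :: "('p, 'f, 'v) clause set \<Rightarrow> ('p, 'f, 'v) atom set \<Rightarrow> bool" where
  "order_acceptable P S \<longleftrightarrow> (\<exists>ge. order_acceptable_via P S ge)"

definition minimal_oa_ordering ::
  "('p, 'f, 'v) clause set \<Rightarrow> ('p, 'f, 'v) atom \<Rightarrow> (('p, 'f, 'v) atom \<times> ('p, 'f, 'v) atom) set \<Rightarrow> bool" where
  "minimal_oa_ordering P Q ge \<longleftrightarrow> order_acceptable_via P {Q} ge \<and>
     \<not> (\<exists>ge1. ge1 \<subset> ge \<and> order_acceptable_via P {Q} ge1)"

end

theory Submission
  imports Defs
begin

definition reqs :: "('p, 'f, 'v) clause set \<Rightarrow> ('p, 'f, 'v) atom set \<Rightarrow> (('p, 'f, 'v) atom \<times> ('p, 'f, 'v) atom) set" where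
  "reqs P S = {(A, B). A \<in> Call P S \<and> (\<exists>c \<in> P. \<exists>c' \<theta> i \<sigma>.
        variant_clause c' c \<and> vars_clause c' \<inter> vars_atom A = {} \<and> is_mgu \<theta> A (head c') \<and>
        i < length (body c') \<and> mutrec P (rel (body c' ! i)) (rel A) \<and>
        cas P (map (subst_atom \<theta>) (take i (body c')))
                     (vars_atom A \<union> vars_clause (subst_clause \<theta> c')) \<sigma> \<and>
        B = subst_atom \<sigma> (subst_atom \<theta> (body c' ! i)))}"

lemma oa_iff: "order_acceptable_via P S ge \<longleftrightarrow>
   wf_quasi_order_on (Call P S) ge \<and> reqs P S \<subseteq> strict_part ge"
  unfolding order_acceptable_via_def reqs_def by blast

lemma strict_trans: "trans ge \<Longrightarrow> trans (strict_part ge)"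
  unfolding trans_def strict_part_def by blast

lemma abstract_min:
  assumes "wf_quasi_order_on C ge" "R \<subseteq> strict_part ge"
  shows "wf_quasi_order_on C (Id_on C \<union> R\<^sup>+) \<and> R \<subseteq> strict_part (Id_on C \<union> R\<^sup>+)
     \<and> (\<forall>g1. wf_quasi_order_on C g1 \<and> R \<subseteq> strict_part g1 \<longrightarrow> Id_on C \<union> R\<^sup>+ \<subseteq> g1)"
proof -
  have sub: "ge \<subseteq> C \<times> C" "refl_on C ge" "trans ge" "wf ((strict_part ge)\<inverse>)"
    using assms(1) unfolding wf_quasi_order_on_def by auto
  have Rs: "R \<subseteq> ge" using assms(2) unfolding strict_part_def by auto
  have RC: "R \<subseteq> C \<times> C" using Rs sub(1) by auto
  have R1: "R\<^sup>+ \<subseteq> strict_part ge"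
    proof
    fix x assume "x \<in> R\<^sup>+"
    then have "x \<in> (strict_part ge)\<^sup>+" using assms(2) trancl_mono by blast
    then show "x \<in> strict_part ge" using trancl_id[OF strict_trans[OF sub(3)]] by simp
  qed
  have R2: "R\<^sup>+ \<subseteq> C \<times> C" using RC trancl_subset_Sigma by blast
  have Sge: "strict_part ge \<subseteq> ge" unfolding strict_part_def by auto
  let ?g = "Id_on C \<union> R\<^sup>+"
  have g_ge: "?g \<subseteq> ge" using R1 Sge sub(2) unfolding refl_on_def by auto
  have t: "trans ?g" unfolding trans_def by (auto dest: trancl_trans)
  have r: "refl_on C ?g" using R2 unfolding refl_on_def by auto
  have sg: "strict_part ?g \<subseteq> strict_part ge"
  proof
    fix x assume "x \<in> strict_part ?g"
    then obtain s t where x: "x = (s,t)" "(s,t) \<in> ?g" "(t,s) \<notin> ?g" unfolding strict_part_def by auto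
    then have "s \<noteq> t" using R2 by auto
    then have "(s,t) \<in> R\<^sup>+" using x by auto
    then show "x \<in> strict_part ge" using R1 x by auto
  qed
  have w: "wf ((strict_part ?g)\<inverse>)" using sub(4) sg by (meson converse_mono wf_subset)
  have q: "wf_quasi_order_on C ?g" unfolding wf_quasi_order_on_def using R2 t r w by auto
  have rs: "R \<subseteq> strict_part ?g"
  proof
    fix x assume "x \<in> R"
    then obtain s t where x: "x = (s,t)" "(s,t) \<in> R" by (cases x) auto
    then have "(s,t) \<in> strict_part ge" using assms(2) by auto
    then have "(t,s) \<notin> ge" unfolding strict_part_def by auto
    then have "(t,s) \<notin> ?g" using g_ge by auto
    then show "x \<in> strict_part ?g" using x unfolding strict_part_def by auto
  qed
  have m: "\<forall>g1. wf_quasi_order_on C g1 \<and> R \<subseteq> strict_part g1 \<longrightarrow> ?g \<subseteq> g1"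
  proof (intro allI impI)
    fix g1 assume a: "wf_quasi_order_on C g1 \<and> R \<subseteq> strict_part g1"
    then have "R \<subseteq> g1" "trans g1" "refl_on C g1"
      unfolding strict_part_def wf_quasi_order_on_def by auto
    then have "R\<^sup>+ \<subseteq> g1" by (metis trancl_id trancl_mono subsetI)
    then show "?g \<subseteq> g1" using \<open>refl_on C g1\<close> unfolding refl_on_def by auto
  qed
  show ?thesis using q rs m by blast
qed

theorem mainTheorem7:
  fixes P :: "('p, 'f, 'v :: infinite) clause set" and Q :: "('p, 'f, 'v) atom"
  assumes "finite P"
    and "order_acceptable P {Q}"
  shows "\<exists>ge. minimal_oa_ordering P Q ge"
proof -
  obtain ge where "order_acceptable_via P {Q} ge" using assms(2) unfolding order_acceptable_def by blast
  then have a: "wf_quasi_order_on (Call P {Q}) ge" "reqs P {Q} \<subseteq> strict_part ge" using oa_iff by blast+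
  note m = abstract_min[OF a]
  let ?g = "Id_on (Call P {Q}) \<union> (reqs P {Q})\<^sup>+"
  have "minimal_oa_ordering P Q ?g"
    unfolding minimal_oa_ordering_def oa_iff using m by blast
  then show ?thesis by blast
qed

end
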